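(* For every constant $k>0$ there is a constant $K$ such that the following holds for all even $n$. Let $a$ be even with $0\le a<n/2$, and let $y\in\{0,1\}^n$ with $\min\{|y|_1,n-|y|_1\}=a$. Let $N\ge N_a:=K a^{5/2}n^2/(n-2a)^{3/2}$. Independently $N$ times, sample an offspring of $y$ by flipping exactly $n/2$ positions chosen uniformly at random (without repetition), and let $Y$ be the number of offspring $z$ with $|z|_1=n/2$. Then, if $a\ge 2$, $$\Pr\big(Y\ge N(p_a+p_{a-2})/2\big)\le\exp\!\big(-k(n-2a)^{1/2}\big),$$ and if $a\le n/2-2$, $$\Pr\big(Y\le N(p_a+p_{a+2})/2\big)\le\exp\!\big(-k(n-2a)^{1/2}\big).$$
   Context: For $x\in\{0,1\}^n$, $|x|_1=\sum_ix_i$. For even $b$ with $0\le b\le n/2$, $p_b:=\binom{n-b}{(n-b)/2}\binom{b}{b/2}\big/\binom{n}{n/2}$; this is the probability that flipping exactly $n/2$ uniformly random positions of a string $x$ with $\min\{|x|_1,n-|x|_1\}=b$ yields a string with exactly $n/2$ ones. *)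

theory Defs
  imports "HOL-Probability.Probability"
begin

text \<open>Bit strings of length n are represented as bool lists of length n (True = 1).\<close>

definition ones :: "bool list \<Rightarrow> nat" where
  "ones x = length (filter id x)"

definition pb :: "nat \<Rightarrow> nat \<Rightarrow> real" where
  "pb n b = real ((n - b) choose ((n - b) div 2)) * real (b choose (b div 2))
            / real (n choose (n div 2))"

definition flip_set :: "bool list \<Rightarrow> nat set \<Rightarrow> bool list" where
  "flip_set y S = map (\<lambda>i. if i \<in> S then \<not> (y ! i) else y ! i) [0..<length y]"

definition offspring :: "bool list \<Rightarrow> bool list pmf" where
  "offspring y = map_pmf (flip_set y)
     (pmf_of_set {S. S \<subseteq> {..<length y} \<and> card S = length y div 2})"

definition samples :: "nat \<Rightarrow> bool list \<Rightarrow> (nat \<Rightarrow> bool list) pmf" where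
  "samples N y = Pi_pmf {..<N} [] (\<lambda>_. offspring y)"

definition countY :: "nat \<Rightarrow> nat \<Rightarrow> (nat \<Rightarrow> bool list) \<Rightarrow> nat" where
  "countY n N f = card {i \<in> {..<N}. ones (f i) = n div 2}"

end

theory Submission
  imports Defs
begin


lemma bool_pmf_eq_bernoulli:
  fixes q :: "bool pmf"
  assumes "pmf q True = p"
  shows "q = bernoulli_pmf p"
proof -
  have p: "0 \<le> p" "p \<le> 1" using assms pmf_nonneg[of q True] pmf_le_1[of q True] by auto
  show ?thesis
    by (rule pmf_eqI) (case_tac i, auto simp: assms p pmf_False_conv_True[of q])
qed

lemma ones_card: "ones y = card {i. i < length y \<and> y ! i}"
  unfolding ones_def by (simp add: length_filter_conv_card)

lemma ones_flip:
  assumes "S \<subseteq> {..<length y}"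
  shows "ones (flip_set y S) = card ({i. i < length y \<and> y ! i} - S) + card (S - {i. i < length y \<and> y ! i})"
proof -
  let ?Ob = "{i. i < length y \<and> y ! i}"
  have "ones (flip_set y S) = card {i. i < length y \<and> (if i \<in> S then \<not> y ! i else y ! i)}"
    unfolding ones_card flip_set_def by (intro arg_cong[where f=card]) auto
  also have "{i. i < length y \<and> (if i \<in> S then \<not> y ! i else y ! i)} = (?Ob - S) \<union> (S - ?Ob)"
    using assms by auto
  also have "card \<dots> = card (?Ob - S) + card (S - ?Ob)"
    by (rule card_Un_disjoint) (use assms finite_subset in auto)
  finally show ?thesis .
qed

lemma card_split_subsets:
  assumes fin: "finite Ob" "finite Zb" and dis: "Ob \<inter> Zb = {}"
  shows "card {S. S \<subseteq> Ob \<union> Zb \<and> card (S \<inter> Ob) = j \<and> card (S \<inter> Zb) = l}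
         = (card Ob choose j) * (card Zb choose l)"
proof -
  have "bij_betw (\<lambda>S. (S \<inter> Ob, S \<inter> Zb)) {S. S \<subseteq> Ob \<union> Zb \<and> card (S \<inter> Ob) = j \<and> card (S \<inter> Zb) = l}
          ({A. A \<subseteq> Ob \<and> card A = j} \<times> {B. B \<subseteq> Zb \<and> card B = l})"
  proof (rule bij_betw_byWitness[where f' = "\<lambda>(A, B). A \<union> B"])
    show "\<forall>S\<in>{S. S \<subseteq> Ob \<union> Zb \<and> card (S \<inter> Ob) = j \<and> card (S \<inter> Zb) = l}.
             (case (S \<inter> Ob, S \<inter> Zb) of (A, B) \<Rightarrow> A \<union> B) = S" by auto
    show "\<forall>x\<in>{A. A \<subseteq> Ob \<and> card A = j} \<times> {B. B \<subseteq> Zb \<and> card B = l}.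
        (\<lambda>S. (S \<inter> Ob, S \<inter> Zb)) (case x of (A, B) \<Rightarrow> A \<union> B) = x"
      using dis by auto
    show "(\<lambda>S. (S \<inter> Ob, S \<inter> Zb)) ` {S. S \<subseteq> Ob \<union> Zb \<and> card (S \<inter> Ob) = j \<and> card (S \<inter> Zb) = l}
      \<subseteq> {A. A \<subseteq> Ob \<and> card A = j} \<times> {B. B \<subseteq> Zb \<and> card B = l}" by auto
    show "(\<lambda>(A, B). A \<union> B) ` ({A. A \<subseteq> Ob \<and> card A = j} \<times> {B. B \<subseteq> Zb \<and> card B = l})
       \<subseteq> {S. S \<subseteq> Ob \<union> Zb \<and> card (S \<inter> Ob) = j \<and> card (S \<inter> Zb) = l}"
    proof safe
      fix A B assume "A \<subseteq> Ob" "B \<subseteq> Zb" "j = card A" "l = card B"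
      then have "(A \<union> B) \<inter> Ob = A" "(A \<union> B) \<inter> Zb = B" using dis by auto
      then show "card ((A \<union> B) \<inter> Ob) = card A" "card ((A \<union> B) \<inter> Zb) = card B" by auto
    qed auto
  qed
  then have "card {S. S \<subseteq> Ob \<union> Zb \<and> card (S \<inter> Ob) = j \<and> card (S \<inter> Zb) = l}
     = card ({A. A \<subseteq> Ob \<and> card A = j} \<times> {B. B \<subseteq> Zb \<and> card B = l})"
    by (rule bij_betw_same_card)
  also have "\<dots> = (card Ob choose j) * (card Zb choose l)"
    by (simp add: card_cartesian_product n_subsets fin)
  finally show ?thesis .
qed

lemma offspring_True:
  assumes len: "length y = n" and evn: "even n" and evm: "even (ones y)"
  shows "pmf (map_pmf (\<lambda>z. ones z = n div 2) (offspring y)) True =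
    real (ones y choose (ones y div 2)) * real ((n - ones y) choose ((n - ones y) div 2))
       / real (n choose (n div 2))"
proof -
  define h where "h = n div 2"
  define m where "m = ones y"
  define Ob where "Ob = {i. i < n \<and> y ! i}"
  define Zb where "Zb = {..<n} - Ob"
  define U where "U = {S. S \<subseteq> {..<n} \<and> card S = h}"
  have m_eq: "m = card Ob" unfolding m_def Ob_def ones_card len ..
  have ObZb: "Ob \<union> Zb = {..<n}" "Ob \<inter> Zb = {}" unfolding Zb_def Ob_def by auto
  have finOb: "finite Ob" "finite Zb" unfolding Ob_def Zb_def by auto
  have cZb: "card Zb = n - m" unfolding Zb_def m_eq
    by (subst card_Diff_subset) (auto simp: Ob_def)
  have mn: "m \<le> n" using m_eq ObZb finOb card_mono[of "{..<n}" Ob] by auto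
  obtain mm where mm: "m = 2 * mm" using evm m_def by blast
  have nh: "n = 2 * h" using evn h_def by simp
  have mmh: "m div 2 = mm" "(n - m) div 2 = h - mm" using mm nh by auto
  have finU: "finite U" unfolding U_def by (rule finite_subset[of _ "Pow {..<n}"]) auto
  have cU: "card U = n choose h" unfolding U_def using n_subsets[of "{..<n}" h] by simp
  have hn: "h \<le> n" unfolding h_def by simp
  have cUpos: "card U > 0" using cU hn by simp
  have UG: "U \<inter> {S. ones (flip_set y S) = h} =
     {S. S \<subseteq> Ob \<union> Zb \<and> card (S \<inter> Ob) = m div 2 \<and> card (S \<inter> Zb) = (n - m) div 2}"
  proof (intro set_eqI iffI)
    fix S assume S: "S \<in> U \<inter> {S. ones (flip_set y S) = h}"
    then have Ssub: "S \<subseteq> {..<n}" and cS: "card S = h" and fl: "ones (flip_set y S) = h"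
      unfolding U_def by auto
    have finS: "finite S" using Ssub finite_subset by blast
    have e1: "ones (flip_set y S) = card (Ob - S) + card (S \<inter> Zb)"
    proof -
      have "S - Ob = S \<inter> Zb" using Ssub unfolding Zb_def by auto
      then show ?thesis using ones_flip[of S y] Ssub len by (simp add: Ob_def)
    qed
    have e2: "card Ob = card (Ob - S) + card (S \<inter> Ob)"
    proof -
      have "Ob = (Ob - S) \<union> (S \<inter> Ob)" by auto
      then have "card Ob = card ((Ob - S) \<union> (S \<inter> Ob))" by simp
      also have "\<dots> = card (Ob - S) + card (S \<inter> Ob)"
        by (rule card_Un_disjoint) (use finOb in auto)
      finally show ?thesis .
    qed
    have e3: "card S = card (S \<inter> Ob) + card (S \<inter> Zb)"
    proof -
      have "S = (S \<inter> Ob) \<union> (S \<inter> Zb)" using Ssub ObZb by auto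
      then have "card S = card ((S \<inter> Ob) \<union> (S \<inter> Zb))" by simp
      also have "\<dots> = card (S \<inter> Ob) + card (S \<inter> Zb)"
        by (rule card_Un_disjoint) (use finS ObZb in auto)
      finally show ?thesis .
    qed
    have "card (S \<inter> Ob) = m div 2 \<and> card (S \<inter> Zb) = (n - m) div 2"
      unfolding mmh using e1 e2 e3 cS fl m_eq mm nh by arith
    then show "S \<in> {S. S \<subseteq> Ob \<union> Zb \<and> card (S \<inter> Ob) = m div 2 \<and> card (S \<inter> Zb) = (n - m) div 2}"
      using Ssub ObZb by auto
  next
    fix S assume S: "S \<in> {S. S \<subseteq> Ob \<union> Zb \<and> card (S \<inter> Ob) = m div 2 \<and> card (S \<inter> Zb) = (n - m) div 2}"
    then have Ssub: "S \<subseteq> {..<n}" and c1: "card (S \<inter> Ob) = m div 2" and c2: "card (S \<inter> Zb) = (n - m) div 2"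
      using ObZb by auto
    have finS: "finite S" using Ssub finite_subset by blast
    have e1: "ones (flip_set y S) = card (Ob - S) + card (S \<inter> Zb)"
    proof -
      have "S - Ob = S \<inter> Zb" using Ssub unfolding Zb_def by auto
      then show ?thesis using ones_flip[of S y] Ssub len by (simp add: Ob_def)
    qed
    have e2: "card Ob = card (Ob - S) + card (S \<inter> Ob)"
    proof -
      have "Ob = (Ob - S) \<union> (S \<inter> Ob)" by auto
      then have "card Ob = card ((Ob - S) \<union> (S \<inter> Ob))" by simp
      also have "\<dots> = card (Ob - S) + card (S \<inter> Ob)"
        by (rule card_Un_disjoint) (use finOb in auto)
      finally show ?thesis .
    qed
    have e3: "card S = card (S \<inter> Ob) + card (S \<inter> Zb)"
    proof -
      have "S = (S \<inter> Ob) \<union> (S \<inter> Zb)" using Ssub ObZb by auto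
      then have "card S = card ((S \<inter> Ob) \<union> (S \<inter> Zb))" by simp
      also have "\<dots> = card (S \<inter> Ob) + card (S \<inter> Zb)"
        by (rule card_Un_disjoint) (use finS ObZb in auto)
      finally show ?thesis .
    qed
    have "card S = h \<and> ones (flip_set y S) = h"
      using e1 e2 e3 c1 c2 m_eq mm nh mmh mn by arith
    then show "S \<in> U \<inter> {S. ones (flip_set y S) = h}" using Ssub unfolding U_def by auto
  qed
  have "pmf (map_pmf (\<lambda>z. ones z = n div 2) (offspring y)) True
      = measure_pmf.prob (pmf_of_set U) {S. ones (flip_set y S) = h}"
    unfolding offspring_def len U_def h_def
    by (simp add: pmf_map vimage_def)
  also have "\<dots> = real (card (U \<inter> {S. ones (flip_set y S) = h})) / real (card U)"
    using finU cUpos by (subst measure_pmf_of_set) auto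
  also have "card (U \<inter> {S. ones (flip_set y S) = h}) = (m choose (m div 2)) * ((n - m) choose ((n - m) div 2))"
    unfolding UG using card_split_subsets[OF finOb ObZb(2)] cZb m_eq by simp
  finally show "pmf (map_pmf (\<lambda>z. ones z = n div 2) (offspring y)) True =
    real (ones y choose (ones y div 2)) * real ((n - ones y) choose ((n - ones y) div 2))
       / real (n choose (n div 2))"
    using cU unfolding m_def h_def by simp
qed

lemma countY_binomial:
  assumes len: "length y = n" and evn: "even n" and evm: "even (ones y)"
  defines "p \<equiv> real (ones y choose (ones y div 2)) * real ((n - ones y) choose ((n - ones y) div 2))
       / real (n choose (n div 2))"
  shows "map_pmf (countY n N) (samples N y) = binomial_pmf N p" and "0 \<le> p" "p \<le> 1"
proof -
  let ?P = "\<lambda>z. ones z = n div 2"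
  have pT: "pmf (map_pmf ?P (offspring y)) True = p" using offspring_True[OF assms(1-3)] p_def by simp
  show p0: "0 \<le> p" "p \<le> 1" using pT pmf_nonneg pmf_le_1 by metis+
  have ob: "map_pmf ?P (offspring y) = bernoulli_pmf p" by (rule bool_pmf_eq_bernoulli[OF pT])
  have "map_pmf ((\<circ>) ?P) (samples N y) = Pi_pmf {..<N} (?P []) (\<lambda>_. bernoulli_pmf p)"
    unfolding samples_def ob[symmetric] by (rule Pi_pmf_map[symmetric]) auto
  then have "map_pmf (\<lambda>f. card {x \<in> {..<N}. f x}) (map_pmf ((\<circ>) ?P) (samples N y)) = binomial_pmf N p"
    using binomial_pmf_altdef'[of "{..<N}" N p "?P []"] p0 by simp
  then show "map_pmf (countY n N) (samples N y) = binomial_pmf N p"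
  proof -
    have e: "countY n N = (\<lambda>f. card {x \<in> {..<N}. ?P (f x)})" unfolding countY_def by (rule ext) simp
    assume "map_pmf (\<lambda>f. card {x \<in> {..<N}. f x}) (map_pmf ((\<circ>) ?P) (samples N y)) = binomial_pmf N p"
    then show ?thesis unfolding e map_pmf_comp o_def .
  qed
qed




lemma binom_mgf:
  fixes p l t :: real
  assumes p: "0 \<le> p" "p \<le> 1" and A: "\<And>x. x \<in> A \<Longrightarrow> l * t \<le> l * real x"
  shows "measure_pmf.prob (binomial_pmf N p) A \<le> exp (real N * p * (exp l - 1) - l * t)"
proof -
  let ?B = "binomial_pmf N p"
  have "measure_pmf.prob ?B A = measure_pmf.prob ?B (A \<inter> set_pmf ?B)"
    by (simp add: measure_Int_set_pmf)
  also have "\<dots> \<le> measure_pmf.prob ?B (A \<inter> {..N})"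
    using p by (intro measure_pmf.finite_measure_mono) (auto simp: set_pmf_binomial_eq split: if_splits)
  also have "\<dots> = (\<Sum>x\<in>A \<inter> {..N}. pmf ?B x)"
    by (rule measure_measure_pmf_finite) auto
  also have "\<dots> \<le> (\<Sum>x\<in>A \<inter> {..N}. pmf ?B x * exp (l * (real x - t)))"
    proof (rule sum_mono)
      fix x assume "x \<in> A \<inter> {..N}"
      then have "0 \<le> l * (real x - t)" using A by (simp add: algebra_simps)
      then have "1 \<le> exp (l * (real x - t))" by simp
      then show "pmf ?B x \<le> pmf ?B x * exp (l * (real x - t))"
        using pmf_nonneg[of ?B x] by (simp add: mult_le_cancel_left1)
    qed
  also have "\<dots> \<le> (\<Sum>x\<in>{..N}. pmf ?B x * exp (l * (real x - t)))"
    by (rule sum_mono2) auto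
  also have "\<dots> = exp (- l * t) * (p * exp l + (1 - p)) ^ N"
    unfolding binomial_ring sum_distrib_left
  proof (rule sum.cong[OF refl])
    fix x assume "x \<in> {..N}"
    have "exp (l * (real x - t)) = exp (- l * t) * exp l ^ x"
      by (simp add: exp_of_nat_mult[symmetric] exp_add[symmetric] algebra_simps)
    then show "pmf ?B x * exp (l * (real x - t)) =
          exp (- l * t) * (real (N choose x) * (p * exp l) ^ x * (1 - p) ^ (N - x))"
      using p by (simp add: pmf_binomial power_mult_distrib)
  qed
  also have "(p * exp l + (1 - p)) ^ N \<le> exp (p * (exp l - 1)) ^ N"
  proof (rule power_mono)
    show "p * exp l + (1 - p) \<le> exp (p * (exp l - 1))"
      using exp_ge_add_one_self[of "p * (exp l - 1)"] by (simp add: algebra_simps)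
    show "0 \<le> p * exp l + (1 - p)" using p by (simp add: add_nonneg_nonneg)
  qed
  then have "exp (- l * t) * (p * exp l + (1 - p)) ^ N \<le> exp (- l * t) * exp (p * (exp l - 1)) ^ N"
    by simp
  also have "\<dots> = exp (real N * p * (exp l - 1) - l * t)"
    by (simp add: exp_of_nat_mult[symmetric] exp_add[symmetric] algebra_simps)
  finally show ?thesis .
qed

lemma exp_neg_bound:
  fixes u :: real assumes "0 \<le> u"
  shows "exp (- u) \<le> 1 - u + u^2"
proof -
  have e: "1 + u + u^2/2 \<le> exp u" by (rule exp_lower_Taylor_quadratic[OF assms])
  have pos: "0 < 1 + u + u^2/2" using assms by (simp add: add_pos_nonneg)
  have "(1 + u + u^2/2) * (1 - u + u^2) = 1 + u^2/2 + u^3/2 + u^4/2"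
    by (simp add: field_simps power2_eq_square power3_eq_cube power4_eq_xxxx)
  also have "\<dots> \<ge> 1" using assms by simp
  finally have h: "1 \<le> (1 + u + u^2/2) * (1 - u + u^2)" .
  have "exp (- u) = 1 / exp u" by (simp add: exp_minus field_simps)
  also have "\<dots> \<le> 1 / (1 + u + u^2/2)" using e pos by (intro divide_left_mono) auto
  also have "\<dots> \<le> 1 - u + u^2" using h pos by (simp add: divide_le_eq mult.commute)
  finally show ?thesis .
qed

lemma chernoff_upper:
  fixes p d :: real
  assumes p: "0 < p" "p \<le> 1" and d: "0 \<le> d" "d \<le> 2 * p"
  shows "measure_pmf.prob (binomial_pmf N p) {x. real N * (p + d) \<le> real x} \<le> exp (- real N * d^2 / (4 * p))"
proof -
  define l where "l = d / (2 * p)"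
  have l: "0 \<le> l" "l \<le> 1" using p d by (auto simp: l_def)
  have "measure_pmf.prob (binomial_pmf N p) {x. real N * (p + d) \<le> real x}
     \<le> exp (real N * p * (exp l - 1) - l * (real N * (p + d)))"
    using p l by (intro binom_mgf) (auto intro: mult_left_mono)
  also have "\<dots> \<le> exp (real N * p * (l + l^2) - l * (real N * (p + d)))"
  proof -
    have "exp l - 1 \<le> l + l^2" using exp_bound[OF l] by simp
    then have "real N * p * (exp l - 1) \<le> real N * p * (l + l^2)"
      using p by (intro mult_left_mono) auto
    then show ?thesis by simp
  qed
  also have "real N * p * (l + l^2) - l * (real N * (p + d)) = - real N * d^2 / (4 * p)"
    using p unfolding l_def by (simp add: field_simps power2_eq_square)
  finally show ?thesis .
qed

lemma chernoff_lower:
  fixes p d :: real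
  assumes p: "0 < p" "p \<le> 1" and d: "0 \<le> d"
  shows "measure_pmf.prob (binomial_pmf N p) {x. real x \<le> real N * (p - d)} \<le> exp (- real N * d^2 / (4 * p))"
proof -
  define u where "u = d / (2 * p)"
  have u: "0 \<le> u" using p d by (auto simp: u_def)
  have "measure_pmf.prob (binomial_pmf N p) {x. real x \<le> real N * (p - d)}
     \<le> exp (real N * p * (exp (- u) - 1) - (- u) * (real N * (p - d)))"
    using p u by (intro binom_mgf) (auto intro: mult_left_mono)
  also have "\<dots> \<le> exp (real N * p * (- u + u^2) - (- u) * (real N * (p - d)))"
  proof -
    have "exp (- u) - 1 \<le> - u + u^2" using exp_neg_bound[OF u] by simp
    then have "real N * p * (exp (- u) - 1) \<le> real N * p * (- u + u^2)"
      using p by (intro mult_left_mono) auto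
    then show ?thesis by simp
  qed
  also have "real N * p * (- u + u^2) - (- u) * (real N * (p - d)) = - real N * d^2 / (4 * p)"
    using p unfolding u_def by (simp add: field_simps power2_eq_square)
  finally show ?thesis .
qed




definition cb :: "nat \<Rightarrow> real" where "cb m = real ((2*m) choose m)"

lemma cb_pos: "cb m > 0" unfolding cb_def by simp

lemma cb_rec_nat: "(m+1) * ((2*m+2) choose (m+1)) = 2*(2*m+1) * ((2*m) choose m)"
proof -
  have e1: "Suc m * (Suc (Suc (2*m)) choose Suc m) = Suc (Suc (2*m)) * (Suc (2*m) choose m)"
    by (rule Suc_times_binomial)
  have e2: "(Suc (2*m) choose m) = (Suc (2*m) choose Suc m)"
    using binomial_symmetric[of m "Suc (2*m)"] by (simp add: Suc_diff_le)
  have e3: "Suc m * (Suc (2*m) choose Suc m) = Suc (2*m) * ((2*m) choose m)"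
    by (rule Suc_times_binomial)
  have "Suc m * (Suc m * (Suc (Suc (2*m)) choose Suc m)) = Suc m * (Suc (Suc (2*m)) * (Suc (2*m) choose m))"
    by (simp only: e1)
  also have "\<dots> = Suc (Suc (2*m)) * (Suc m * (Suc (2*m) choose Suc m))"
    unfolding e2 by (simp only: mult.assoc mult.commute mult.left_commute)
  also have "\<dots> = Suc (Suc (2*m)) * (Suc (2*m) * ((2*m) choose m))"
    by (simp only: e3)
  also have "\<dots> = Suc m * (2 * (Suc (2*m) * ((2*m) choose m)))"
    by simp
  finally have "Suc m * (Suc m * (Suc (Suc (2*m)) choose Suc m)) = Suc m * (2 * (Suc (2*m) * ((2*m) choose m)))" .
  then have "Suc m * (Suc (Suc (2*m)) choose Suc m) = 2 * (Suc (2*m) * ((2*m) choose m))"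
    by (subst (asm) mult_left_cancel) auto
  then show ?thesis by (simp add: algebra_simps)
qed

lemma cb_rec: "real (m+1) * cb (m+1) = 2*(2*real m+1) * cb m"
proof -
  have "real ((m+1) * ((2*m+2) choose (m+1))) = real (2*(2*m+1) * ((2*m) choose m))"
    by (simp only: cb_rec_nat)
  moreover have "2 * (m+1) = 2*m+2" by simp
  ultimately show ?thesis unfolding cb_def by (simp add: algebra_simps)
qed

lemma cb_step_le: "cb (m+1) \<le> 4 * cb m"
proof -
  have "real (m+1) * cb (m+1) = 2*(2*real m+1) * cb m" by (rule cb_rec)
  also have "\<dots> \<le> real (m+1) * (4 * cb m)" using cb_pos[of m] by (simp add: algebra_simps)
  finally show ?thesis by (subst (asm) mult_le_cancel_left_pos) auto
qed

lemma cb_le_pow: "cb (m+j) \<le> 4^j * cb m"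
proof (induction j)
  case (Suc j)
  have "cb (m + Suc j) \<le> 4 * cb (m+j)" using cb_step_le[of "m+j"] by simp
  also have "\<dots> \<le> 4 * (4^j * cb m)" using Suc by simp
  finally show ?case by simp
qed simp

lemma cb_lower: "m \<ge> 1 \<Longrightarrow> 4 * real m * (cb m)^2 \<ge> (4^m)^2"
proof (induction m rule: nat_induct_at_least)
  case base
  then show ?case by (simp add: cb_def)
next
  case (Suc m)
  define X where "X = (cb m)^2"
  define X' where "X' = (cb (m+1))^2"
  have r: "(real m+1)^2 * X' = 4*(2*real m+1)^2 * X"
  proof -
    have "(real m+1)^2 * X' = (real (m+1) * cb (m+1))^2" by (simp add: X'_def power_mult_distrib)
    also have "\<dots> = (2*(2*real m+1) * cb m)^2" by (simp only: cb_rec)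
    also have "\<dots> = 4*(2*real m+1)^2 * X" by (simp add: X_def power_mult_distrib power2_eq_square algebra_simps)
    finally show ?thesis .
  qed
  have X0: "X \<ge> 0" unfolding X_def by simp
  have "4 * (real m + 1) * X' * (real m + 1) = 16 * (2*real m+1)^2 * X"
    using r by (simp add: algebra_simps power2_eq_square)
  also have "\<dots> \<ge> 16 * (real m + 1) * (4 * real m * X)"
  proof -
    have a1: "16 * (real m + 1) * (4 * real m * X) = (64*real m^2 + 64*real m) * X"
      by (simp add: algebra_simps power2_eq_square)
    have a2: "16 * (2*real m+1)^2 * X = (64*real m^2 + 64*real m + 16) * X"
      by (simp add: algebra_simps power2_eq_square)
    show ?thesis unfolding a1 a2 using X0 by (intro mult_right_mono) auto
  qed
  finally have "4 * (real m + 1) * X' * (real m + 1) \<ge> 16 * (real m + 1) * (4 * real m * X)"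
    by simp
  moreover have "16 * (real m + 1) * (4 * real m * X) \<ge> 16 * (real m + 1) * (4^m)^2"
    using Suc.IH unfolding X_def by (intro mult_left_mono) auto
  ultimately have "(4 * (real m + 1) * X') * (real m + 1) \<ge> (16 * (4^m)^2) * (real m + 1)"
    by (simp add: algebra_simps)
  then have "4 * (real m + 1) * X' \<ge> 16 * (4^m)^2"
    by (subst (asm) mult_le_cancel_right_pos) auto
  then show ?case unfolding X'_def by (simp add: power_mult_distrib power2_eq_square algebra_simps)
qed

lemma pb_alt:
  assumes "even n" "even b" "b \<le> n"
  shows "pb n b = cb ((n-b) div 2) * cb (b div 2) / cb (n div 2)"
proof -
  obtain h j where h: "n = 2*h" and j: "b = 2*j" using assms by (auto elim!: evenE)
  have "n - b = 2 * (h - j)" using h j by simp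
  then show ?thesis unfolding pb_def cb_def using h j by simp
qed

lemma pb_zero: "even n \<Longrightarrow> pb n 0 = 1"
  using pb_alt[of n 0] cb_pos[of "n div 2"] by (simp add: cb_def)

lemma pb_nonneg: "pb n b \<ge> 0" unfolding pb_def by simp

lemma pb_lower:
  assumes "even n" "even b" "2 \<le> b" "b \<le> n"
  shows "pb n b * sqrt (2 * real b) \<ge> 1"
proof -
  obtain h j where h: "n = 2*h" and j: "b = 2*j" using assms by (auto elim!: evenE)
  have jh: "j \<le> h" "j \<ge> 1" using h j assms by auto
  have hj: "(n - b) div 2 = h - j" using h j by simp
  have p: "pb n b = cb (h-j) * cb j / cb h" using pb_alt[OF assms(1,2,4)] h j hj by simp
  have "cb h \<le> 4^j * cb (h-j)" using cb_le_pow[of "h-j" j] jh by simp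
  then have "pb n b \<ge> cb (h-j) * cb j / (4^j * cb (h-j))"
    unfolding p using cb_pos[of j] cb_pos[of "h-j"] cb_pos[of h]
    by (intro divide_left_mono mult_pos_pos) auto
  also have "cb (h-j) * cb j / (4^j * cb (h-j)) = cb j / 4^j" using cb_pos[of "h-j"] by simp
  finally have pge: "pb n b \<ge> cb j / 4^j" .
  have "(cb j / 4^j * sqrt (2 * real b))^2 = (cb j)^2 * (4 * real j) / (4^j)^2"
    using j by (simp add: power_mult_distrib power_divide)
  also have "\<dots> \<ge> 1" using cb_lower[OF jh(2)] by (simp add: field_simps)
  finally have sq1: "(cb j / 4^j * sqrt (2 * real b))^2 \<ge> 1" .
  have "cb j / 4^j * sqrt (2 * real b) \<ge> 1"
  proof (rule power2_le_imp_le)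
    show "1\<^sup>2 \<le> (cb j / 4 ^ j * sqrt (2 * real b))\<^sup>2" using sq1 by simp
    show "0 \<le> cb j / 4 ^ j * sqrt (2 * real b)" using cb_pos[of j] by simp
  qed
  moreover have "pb n b * sqrt (2 * real b) \<ge> cb j / 4^j * sqrt (2 * real b)"
    using pge by (intro mult_right_mono) auto
  ultimately show ?thesis by linarith
qed

lemma pb_ratio:
  assumes "even n" "1 \<le> j" "2*j \<le> n"
  shows "pb n (2*j) * real j * (2*(real (n div 2) - real j)+1)
       = pb n (2*j-2) * (2*real j - 1) * (real (n div 2) - real j + 1)"
proof -
  obtain h where h: "n = 2*h" using assms by (auto elim!: evenE)
  obtain i where i: "j = i + 1" using assms by (metis add.commute le_Suc_ex)
  have ih: "i + 1 \<le> h" using h i assms by simp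
  obtain g where g: "h = g + i + 1" using ih by (metis add.commute le_Suc_ex add.assoc add_Suc_right)
  have P: "pb n (2*j) = cb g * cb (i+1) / cb h"
    using pb_alt[of n "2*j"] assms h g i by simp
  have Q: "pb n (2*j-2) = cb (g+1) * cb i / cb h"
    using pb_alt[of n "2*j-2"] assms h g i by (simp add: algebra_simps)
  have r1: "real (i+1) * cb (i+1) = 2*(2*real i+1) * cb i" by (rule cb_rec)
  have r2: "real (g+1) * cb (g+1) = 2*(2*real g+1) * cb g" by (rule cb_rec)
  have hd: "real (n div 2) = real g + real i + 1" using h g by simp
  have jr: "real j = real i + 1" using i by simp
  have c1: "cb (i+1) = 2*(2*real i+1) * cb i / (real i + 1)" using r1
    by (simp add: field_simps)
  have c2: "cb (g+1) = 2*(2*real g+1) * cb g / (real g + 1)" using r2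
    by (simp add: field_simps)
  have L: "pb n (2*j) * real j * (2*(real (n div 2) - real j)+1)
      = (real (i+1) * cb (i+1)) * cb g * (2*real g+1) / cb h"
    unfolding P hd jr by (simp add: field_simps)
  have R: "pb n (2*j-2) * (2*real j - 1) * (real (n div 2) - real j + 1)
      = (real (g+1) * cb (g+1)) * cb i * (2*real i+1) / cb h"
    unfolding Q hd jr by (simp add: field_simps)
  show ?thesis unfolding L R r1 r2 by (simp add: field_simps)
qed



lemma final_ineq:
  fixes k s t nn X P d N :: real
  assumes k: "k > 0" and s: "s > 0" and t: "t > 0" and nn: "nn > 0" and P: "0 < P" "P \<le> X"
    and X: "X * (sqrt 2 * s) \<ge> 1" and d: "d \<ge> X * t^2 / (8 * s^2 * nn)"
    and N: "N \<ge> 512 * k * s^5 * nn^2 / t^3"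
  shows "k * t \<le> N * d^2 / (4 * P)"
proof -
  have X0: "X > 0" using P by simp
  have "512 * k * s^5 * nn^2 / t^3 > 0" using k s t nn by simp
  then have Npos: "N > 0" using N by linarith
  have d0: "0 \<le> X * t^2 / (8 * s^2 * nn)" using X0 s nn by simp
  have r2: "sqrt 2 > 0" by simp
  have "N * d^2 / (4 * P) \<ge> N * d^2 / (4 * X)"
    using P Npos by (intro divide_left_mono) auto
  moreover have "N * d^2 / (4 * X) \<ge> N * (X * t^2 / (8 * s^2 * nn))^2 / (4 * X)"
    using d d0 Npos X0 by (intro divide_right_mono mult_left_mono power_mono) auto
  moreover have "N * (X * t^2 / (8 * s^2 * nn))^2 / (4 * X) = (N * t^4 / (256 * s^4 * nn^2)) * X"
    using X0 s nn by (simp add: field_simps power2_eq_square power4_eq_xxxx)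
  moreover have "(N * t^4 / (256 * s^4 * nn^2)) * X \<ge> (N * t^4 / (256 * s^4 * nn^2)) * (1 / (sqrt 2 * s))"
    using X s r2 Npos t nn by (intro mult_left_mono) (auto simp: field_simps)
  moreover have "(N * t^4 / (256 * s^4 * nn^2)) * (1 / (sqrt 2 * s)) = N * (t^4 / (256 * sqrt 2 * s^5 * nn^2))"
  proof -
    have "s * s^4 = s^5" by (simp add: power_Suc[symmetric] del: power_Suc)
    then show ?thesis by (simp add: field_simps)
  qed
  moreover have "N * (t^4 / (256 * sqrt 2 * s^5 * nn^2)) \<ge> (512 * k * s^5 * nn^2 / t^3) * (t^4 / (256 * sqrt 2 * s^5 * nn^2))"
    using N t s nn r2 by (intro mult_right_mono) auto
  moreover have "(512 * k * s^5 * nn^2 / t^3) * (t^4 / (256 * sqrt 2 * s^5 * nn^2)) = 2 * k * t / sqrt 2"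
  proof -
    have t4: "t^4 = t^3 * t" by (simp add: power_numeral_reduce)
    show ?thesis unfolding t4 using t s nn r2 by (simp add: field_simps)
  qed
  moreover have "2 * k * t / sqrt 2 \<ge> k * t"
  proof -
    have s2: "sqrt 2 \<le> 2" using real_sqrt_le_mono[of 2 4] by simp
    have "k * t * sqrt 2 \<le> k * t * 2" using mult_left_mono[OF s2, of "k*t"] k t by simp
    then have "k * t * sqrt 2 \<le> 2 * k * t" by (simp add: algebra_simps)
    then show ?thesis using r2 by (simp add: field_simps)
  qed
  ultimately show ?thesis by linarith
qed


lemma gap_up_aux1:
  fixes j h :: real assumes "j \<ge> 1" "h \<ge> 2*j+1"
  shows "(h-2*j+1)*(4*j*h) \<ge> (2*h-4*j)*(j*(2*h-2*j+1))"
proof -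
  have "(h-2*j+1)*(4*j*h) - (2*h-4*j)*(j*(2*h-2*j+1)) = 2*j*(2*h + (h-2*j)*(2*j-1))"
    by (simp add: algebra_simps)
  moreover have "0 \<le> 2*j*(2*h + (h-2*j)*(2*j-1))" using assms by (intro mult_nonneg_nonneg add_nonneg_nonneg) auto
  ultimately show ?thesis by linarith
qed
lemma gap_up_aux2:
  fixes j h :: real assumes "j \<ge> 1" "h \<ge> 2*j+1"
  shows "2*((2*j-1)*(h-j+1)) \<ge> j*(2*h-2*j+1)"
proof -
  have "2*((2*j-1)*(h-j+1)) - j*(2*h-2*j+1) = 2*(h-(2*j+1))*(j-1) + 2*j^2 + 3*j - 4"
    by (simp add: algebra_simps power2_eq_square)
  moreover have "0 \<le> 2*(h-(2*j+1))*(j-1)" using assms by auto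
  moreover have "2*j^2 + 3*j - 4 \<ge> 0"
  proof -
    have "1 \<le> j^2" using assms(1) by (rule one_le_power)
    then show ?thesis using assms by linarith
  qed
  ultimately show ?thesis by linarith
qed
lemma gap_up:
  fixes j h P Q :: real assumes j: "j \<ge> 1" and h: "h \<ge> 2*j+1" and Q: "Q \<ge> 0"
    and eq: "P * j * (2*(h-j)+1) = Q * (2*j-1) * (h-j+1)"
  shows "Q - P \<ge> Q * (2*h-4*j) / (2*j*(2*h))" and "Q \<le> 2 * P"
proof -
  define A where "A = j*(2*h-2*j+1)"
  define B where "B = (2*j-1)*(h-j+1)"
  have A0: "A > 0" unfolding A_def using j h by (intro mult_pos_pos) auto
  have eq': "P * A = Q * B" using eq unfolding A_def B_def by (simp add: algebra_simps)
  have AB: "A - B = h - 2*j + 1" unfolding A_def B_def by (simp add: algebra_simps)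
  have "(Q - P) * A = Q * A - P * A" by (simp add: algebra_simps)
  also have "\<dots> = Q * (A - B)" using eq' by (simp add: algebra_simps)
  also have "\<dots> = Q * (h - 2*j + 1)" using AB by simp
  finally have "(Q - P) * A = Q * (h - 2*j + 1)" .
  then have QP: "Q - P = Q * (h - 2*j + 1) / A" using A0 by (simp add: field_simps)
  have "Q * (2*h-4*j) / (2*j*(2*h)) \<le> Q * (h - 2*j + 1) / A"
  proof -
    have hp: "2*j*(2*h) > 0" using j h by simp
    have "Q * ((2*h-4*j) * A) \<le> Q * ((h - 2*j + 1) * (4*j*h))"
      using gap_up_aux1[OF j h] Q unfolding A_def by (intro mult_left_mono) auto
    then have "Q * (2*h-4*j) * A \<le> Q * (h - 2*j + 1) * (2*j*(2*h))"
      by (simp add: algebra_simps)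
    then show ?thesis using hp A0 by (simp add: divide_simps)
  qed
  then show "Q - P \<ge> Q * (2*h-4*j) / (2*j*(2*h))" using QP by simp
  have "Q * A \<le> Q * (2 * B)" using gap_up_aux2[OF j h] Q unfolding A_def B_def by (intro mult_left_mono) auto
  also have "\<dots> = 2 * P * A" using eq' by simp
  finally show "Q \<le> 2 * P" using A0 by simp
qed
lemma gap_low:
  fixes j h P R :: real assumes j: "j \<ge> 1" and h: "h \<ge> 2*j+2" and P: "P \<ge> 0"
    and eq: "R * (j+1) * (2*(h-(j+1))+1) = P * (2*(j+1)-1) * (h-(j+1)+1)"
  shows "P - R \<ge> P * (2*h-4*j) / (4*(2*j)*(2*h))"
proof -
  define A where "A = (j+1)*(2*h-2*j-1)"
  define B where "B = (2*j+1)*(h-j)"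
  have A0: "A > 0" unfolding A_def using j h by (intro mult_pos_pos) auto
  have eq': "R * A = P * B" using eq unfolding A_def B_def by (simp add: algebra_simps)
  have AB: "A - B = h - 2*j - 1" unfolding A_def B_def by (simp add: algebra_simps)
  have "(P - R) * A = P * A - R * A" by (simp add: algebra_simps)
  also have "\<dots> = P * (A - B)" using eq' by (simp add: algebra_simps)
  also have "\<dots> = P * (h - 2*j - 1)" using AB by simp
  finally have "(P - R) * A = P * (h - 2*j - 1)" .
  then have PR: "P - R = P * (h - 2*j - 1) / A" using A0 by (simp add: field_simps)
  have "P * (2*h-4*j) / (4*(2*j)*(2*h)) \<le> P * (h - 2*j - 1) / A"
  proof -
    have hp: "4*(2*j)*(2*h) > 0" using j h by simp
    have aux: "(2*h-4*j) * A \<le> (h - 2*j - 1) * (4*(2*j)*(2*h))"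
    proof -
      have Ale: "A \<le> (2*j)*(2*h)" unfolding A_def using j h by (intro mult_mono) auto
      have "(2*h-4*j) * A \<le> (4*(h-2*j-1)) * ((2*j)*(2*h))"
        using Ale A0 j h by (intro mult_mono) auto
      then show ?thesis by (simp add: algebra_simps)
    qed
    have "P * (2*h-4*j) * A \<le> P * (h - 2*j - 1) * (4*(2*j)*(2*h))"
      using mult_left_mono[OF aux P] by (simp add: algebra_simps)
    then show ?thesis using hp A0 by (simp add: divide_simps)
  qed
  then show ?thesis using PR by simp
qed
lemma powr_52: "0 < (x::real) \<Longrightarrow> x powr (5/2) = sqrt x ^ 5"
proof -
  assume x: "0 < x"
  have "sqrt x ^ 5 = (x powr (1/2)) ^ 5" using x by (simp add: powr_half_sqrt)
  also have "\<dots> = x powr (1/2 * 5)" using x by (subst powr_realpow[symmetric]) (auto simp: powr_powr)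
  finally show ?thesis by simp
qed

lemma powr_32: "0 < (x::real) \<Longrightarrow> x powr (3/2) = sqrt x ^ 3"
proof -
  assume x: "0 < x"
  have "sqrt x ^ 3 = (x powr (1/2)) ^ 3" using x by (simp add: powr_half_sqrt)
  also have "\<dots> = x powr (1/2 * 3)" using x by (subst powr_realpow[symmetric]) (auto simp: powr_powr)
  finally show ?thesis by simp
qed

theorem lemma16:
  fixes k :: real
  assumes "k > 0"
  shows "\<exists>K::real. \<forall>n a N (y::bool list).
     even n \<longrightarrow> even a \<longrightarrow> 2 * a < n \<longrightarrow> length y = n \<longrightarrow>
     min (ones y) (n - ones y) = a \<longrightarrow> 0 < N \<longrightarrow>
     real N \<ge> K * real a powr (5/2) * (real n)^2 / (real n - 2 * real a) powr (3/2) \<longrightarrow>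
     (a \<ge> 2 \<longrightarrow>
        measure_pmf.prob (samples N y)
          {f. real (countY n N f) \<ge> real N * (pb n a + pb n (a - 2)) / 2}
        \<le> exp (- k * sqrt (real n - 2 * real a))) \<and>
     (a + 2 \<le> n div 2 \<longrightarrow>
        measure_pmf.prob (samples N y)
          {f. real (countY n N f) \<le> real N * (pb n a + pb n (a + 2)) / 2}
        \<le> exp (- k * sqrt (real n - 2 * real a)))"
proof (rule exI[of _ "512 * k"], intro allI impI)
  fix n a N and y :: "bool list"
  assume evn: "even n" and eva: "even a" and an: "2 * a < n" and len: "length y = n"
    and mina: "min (ones y) (n - ones y) = a" and Npos: "0 < N"
    and Nge: "real N \<ge> 512 * k * real a powr (5/2) * (real n)^2 / (real n - 2 * real a) powr (3/2)"
  have k: "k > 0" by (rule assms)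
  define m where "m = ones y"
  have mn: "m \<le> n" unfolding m_def ones_def using len by (metis length_filter_le)
  have ma: "m = a \<or> m = n - a" using mina mn unfolding m_def by linarith
  have evm: "even (ones y)" using ma evn eva unfolding m_def by auto
  have pe: "real (ones y choose (ones y div 2)) * real ((n - ones y) choose ((n - ones y) div 2))
       / real (n choose (n div 2)) = pb n a"
    using ma unfolding m_def
  proof
    assume "ones y = a" then show ?thesis by (simp add: pb_def)
  next
    assume e: "ones y = n - a"
    have "n - (n - a) = a" using an by simp
    then show ?thesis unfolding e pb_def by (simp add: mult.commute)
  qed
  note bin = countY_binomial[OF len evn evm, unfolded pe]
  have probeq: "\<And>\<Phi>. measure_pmf.prob (samples N y) {f. \<Phi> (real (countY n N f))}
      = measure_pmf.prob (binomial_pmf N (pb n a)) {x. \<Phi> (real x)}"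
    unfolding bin(1)[symmetric] measure_map_pmf by (simp add: vimage_def)
  define h where "h = n div 2"
  define j where "j = a div 2"
  have hn: "n = 2 * h" using evn h_def by simp
  have ja: "a = 2 * j" using eva j_def by simp
  have jh: "2 * j < h" using an hn ja by simp
  define D where "D = real n - 2 * real a"
  have Dpos: "D > 0" using an unfolding D_def by simp
  define t where "t = sqrt D"
  have t: "t > 0" "t^2 = D" using Dpos unfolding t_def by auto
  have Dhj: "D = 2 * real h - 4 * real j" unfolding D_def using hn ja by simp
  have npos: "real n > 0" using an by simp
  have goal_exp: "exp (- real N * d^2 / (4 * P)) \<le> exp (- k * sqrt (real n - 2 * real a))"
    if "k * t \<le> real N * d^2 / (4 * P)" for d P
    using that unfolding t_def D_def by simp
  show "(a \<ge> 2 \<longrightarrow>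
        measure_pmf.prob (samples N y)
          {f. real (countY n N f) \<ge> real N * (pb n a + pb n (a - 2)) / 2}
        \<le> exp (- k * sqrt (real n - 2 * real a))) \<and>
     (a + 2 \<le> n div 2 \<longrightarrow>
        measure_pmf.prob (samples N y)
          {f. real (countY n N f) \<le> real N * (pb n a + pb n (a + 2)) / 2}
        \<le> exp (- k * sqrt (real n - 2 * real a)))"
  proof (intro conjI impI)
    have common: "real N \<ge> 512 * k * sqrt (real a) ^ 5 * (real n)^2 / t^3 \<and> sqrt (real a) > 0
        \<and> pb n a * (sqrt 2 * sqrt (real a)) \<ge> 1 \<and> sqrt (real a) ^ 2 = real a"
      if a2: "a \<ge> 2"
    proof -
      have "real a > 0" using a2 by simp
      then have "real a powr (5/2) = sqrt (real a) ^ 5" by (rule powr_52)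
      moreover have "(real n - 2 * real a) powr (3/2) = t ^ 3" unfolding t_def D_def
        using Dpos unfolding D_def by (rule powr_32)
      moreover have "pb n a * sqrt (2 * real a) \<ge> 1"
        using pb_lower[OF evn eva a2] an by simp
      ultimately show ?thesis using Nge a2 by (simp add: real_sqrt_mult)
    qed
    {
      assume a2: "a \<ge> 2"
      let ?P = "pb n a" and ?Q = "pb n (a - 2)"
      have j1: "1 \<le> j" using a2 ja by simp
      have rat: "?P * real j * (2*(real h - real j)+1) = ?Q * (2*real j - 1) * (real h - real j + 1)"
        using pb_ratio[OF evn j1, of] ja hn jh unfolding h_def by simp
      have hj1: "real h \<ge> 2 * real j + 1" using jh by simp
      have gu: "?Q - ?P \<ge> ?Q * (2*real h-4*real j) / (2*real j*(2*real h))" "?Q \<le> 2 * ?P"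
        using gap_up[OF _ hj1 pb_nonneg rat] j1 by auto
      have Pl: "?P * (sqrt 2 * sqrt (real a)) \<ge> 1" using common a2 by blast
      have sa: "sqrt (real a) > 0" using a2 by simp
      have Ppos: "?P > 0" using Pl sa pb_nonneg[of n a]
        by (metis less_eq_real_def mult_eq_0_iff not_one_le_zero)
      have P1: "?P \<le> 1" using bin by simp
      have Ql: "?Q * (sqrt 2 * sqrt (real a)) \<ge> 1"
      proof (cases "a = 2")
        case True
        have "sqrt 2 * sqrt 2 = (2::real)" by simp
        then show ?thesis using True pb_zero[OF evn] by simp
      next
        case False
        then have a4: "a - 2 \<ge> 2" using a2 eva by presburger
        have l: "?Q * sqrt (2 * real (a - 2)) \<ge> 1"
          using pb_lower[OF evn _ a4] eva an by simp
        have "sqrt (2 * real (a - 2)) \<le> sqrt 2 * sqrt (real a)"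
          using a2 by (simp add: real_sqrt_mult[symmetric])
        then have "?Q * sqrt (2 * real (a - 2)) \<le> ?Q * (sqrt 2 * sqrt (real a))"
          using pb_nonneg by (intro mult_left_mono) auto
        then show ?thesis using l by linarith
      qed
      define d where "d = (?Q - ?P) / 2"
      have eqd: "?Q * (2*real h-4*real j) / (2*real j*(2*real h)) = ?Q * D / (real a * real n)"
        using Dhj hn ja by simp
      have hh: "?Q * D / (2 * real a * real n) = (?Q * D / (real a * real n)) / 2" by simp
      have dge: "d \<ge> ?Q * D / (2 * real a * real n)"
        using gu(1) unfolding d_def eqd hh by (intro divide_right_mono) auto
      have dge0: "?Q * D / (2 * real a * real n) \<ge> 0" using pb_nonneg Dpos by simp
      have d0: "0 \<le> d" using dge dge0 by linarith
      have d2: "d \<le> 2 * ?P" using gu(2) Ppos unfolding d_def by simp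
      have dge8: "d \<ge> ?Q * t^2 / (8 * sqrt (real a)^2 * real n)"
      proof -
        have "?Q * t^2 / (8 * sqrt (real a)^2 * real n) = (?Q * D / (2 * real a * real n)) / 4"
          using common a2 t by (simp add: field_simps)
        also have "\<dots> \<le> ?Q * D / (2 * real a * real n)" using dge0 by simp
        also have "\<dots> \<le> d" by (rule dge)
        finally show ?thesis .
      qed
      have fin: "k * t \<le> real N * d^2 / (4 * ?P)"
        by (rule final_ineq[OF k sa t(1) npos Ppos _ Ql dge8])
           (use d0 common[OF a2] in \<open>simp_all add: d_def\<close>)
      have seteq: "{x. real N * (?P + ?Q) / 2 \<le> real x} = {x. real N * (?P + d) \<le> real x}"
        unfolding d_def by (simp add: field_simps)
      show "measure_pmf.prob (samples N y)
          {f. real (countY n N f) \<ge> real N * (?P + ?Q) / 2}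
        \<le> exp (- k * sqrt (real n - 2 * real a))"
      proof -
        have "measure_pmf.prob (samples N y) {f. real (countY n N f) \<ge> real N * (?P + ?Q) / 2}
           = measure_pmf.prob (binomial_pmf N ?P) {x. real N * (?P + ?Q) / 2 \<le> real x}"
          using probeq[of "\<lambda>z. real N * (?P + ?Q) / 2 \<le> z"] by simp
        also have "\<dots> = measure_pmf.prob (binomial_pmf N ?P) {x. real N * (?P + d) \<le> real x}"
          unfolding seteq ..
        also have "\<dots> \<le> exp (- real N * d^2 / (4 * ?P))" by (rule chernoff_upper[OF Ppos P1 d0 d2])
        also have "\<dots> \<le> exp (- k * sqrt (real n - 2 * real a))" by (rule goal_exp[OF fin])
        finally show ?thesis .
      qed
    }
    {
      assume a2h: "a + 2 \<le> n div 2"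
      let ?P = "pb n a" and ?R = "pb n (a + 2)"
      show "measure_pmf.prob (samples N y)
          {f. real (countY n N f) \<le> real N * (?P + ?R) / 2}
        \<le> exp (- k * sqrt (real n - 2 * real a))"
      proof (cases "a = 0")
        case True
        have P1: "?P = 1" using True pb_zero[OF evn] by simp
        have h2: "h \<ge> 2" using a2h True h_def by simp
        have rat: "pb n 2 * (2 * real h - 1) = pb n 0 * real h"
          using pb_ratio[OF evn, of 1] h2 hn unfolding h_def by simp
        have R2: "?R = pb n 2" using True by (simp add: numeral_2_eq_2)
        have Rh: "?R * (2 * real h - 1) = real h" using rat pb_zero[OF evn] R2 by simp
        have h2r: "real h \<ge> 2" using h2 by simp
        have R1: "?R < 1"
        proof (rule ccontr)
          assume "\<not> ?R < 1"
          then have "1 * (2 * real h - 1) \<le> ?R * (2 * real h - 1)"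
            using h2r by (intro mult_right_mono) auto
          then have "2 * real h - 1 \<le> ?R * (2 * real h - 1)" by simp
          then show False using Rh h2r by linarith
        qed
        have sp: "set_pmf (binomial_pmf N ?P) = {N}" unfolding P1 by (simp add: set_pmf_binomial_eq)
        have "measure_pmf.prob (binomial_pmf N ?P) {x. real x \<le> real N * (?P + ?R) / 2}
          = measure_pmf.prob (binomial_pmf N ?P) ({x. real x \<le> real N * (?P + ?R) / 2} \<inter> set_pmf (binomial_pmf N ?P))"
          by (simp add: measure_Int_set_pmf)
        also have "{x. real x \<le> real N * (?P + ?R) / 2} \<inter> set_pmf (binomial_pmf N ?P) = {}"
        proof -
          have "real N * (?P + ?R) / 2 < real N" using R1 Npos P1 by simp
          then show ?thesis unfolding sp by auto
        qed
        finally have z: "measure_pmf.prob (binomial_pmf N ?P) {x. real x \<le> real N * (?P + ?R) / 2} = 0"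
          by simp
        have "measure_pmf.prob (samples N y) {f. real (countY n N f) \<le> real N * (?P + ?R) / 2} = 0"
          using probeq[of "\<lambda>z. z \<le> real N * (?P + ?R) / 2"] z by simp
        then show ?thesis by simp
      next
        case False
        then have a2: "a \<ge> 2" using eva by presburger
        have j1: "1 \<le> j" using a2 ja by simp
        have hj2: "real h \<ge> 2 * real j + 2" using a2h ja h_def by simp
        have rat0: "pb n (2*(j+1)) * real (j+1) * (2*(real (n div 2) - real (j+1))+1)
             = pb n (2*(j+1)-2) * (2*real (j+1) - 1) * (real (n div 2) - real (j+1) + 1)"
          by (rule pb_ratio[OF evn]) (use a2h ja in auto)
        have rat: "?R * (real j + 1) * (2*(real h - (real j + 1))+1)
             = ?P * (2*(real j + 1) - 1) * (real h - (real j + 1) + 1)"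
          using rat0 ja unfolding h_def by (simp add: algebra_simps)
        have gl: "?P - ?R \<ge> ?P * (2*real h-4*real j) / (4*(2*real j)*(2*real h))"
          by (rule gap_low[OF _ hj2 pb_nonneg rat]) (use j1 in simp)
        have Pl: "?P * (sqrt 2 * sqrt (real a)) \<ge> 1" using common a2 by blast
        have sa: "sqrt (real a) > 0" using a2 by simp
        have Ppos: "?P > 0" using Pl sa pb_nonneg[of n a]
          by (metis less_eq_real_def mult_eq_0_iff not_one_le_zero)
        have P1: "?P \<le> 1" using bin by simp
        define d where "d = (?P - ?R) / 2"
        have eqd: "?P * (2*real h-4*real j) / (4*(2*real j)*(2*real h)) = ?P * D / (4 * real a * real n)"
          using Dhj hn ja by simp
        have hh: "?P * D / (8 * real a * real n) = (?P * D / (4 * real a * real n)) / 2" by simp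
        have dge: "d \<ge> ?P * D / (8 * real a * real n)"
          using gl unfolding d_def eqd hh by (intro divide_right_mono) auto
        have dge0: "?P * D / (8 * real a * real n) \<ge> 0" using pb_nonneg Dpos by simp
        have d0: "0 \<le> d" using dge dge0 by linarith
        have dge8: "d \<ge> ?P * t^2 / (8 * sqrt (real a)^2 * real n)"
          using dge common a2 t by simp
        have fin: "k * t \<le> real N * d^2 / (4 * ?P)"
          by (rule final_ineq[OF k sa t(1) npos Ppos _ Pl dge8])
             (use common a2 in auto)
        have seteq: "{x. real x \<le> real N * (?P + ?R) / 2} = {x. real x \<le> real N * (?P - d)}"
          unfolding d_def by (simp add: field_simps)
        show ?thesis
        proof -
          have "measure_pmf.prob (samples N y) {f. real (countY n N f) \<le> real N * (?P + ?R) / 2}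
             = measure_pmf.prob (binomial_pmf N ?P) {x. real x \<le> real N * (?P + ?R) / 2}"
            using probeq[of "\<lambda>z. z \<le> real N * (?P + ?R) / 2"] by simp
          also have "\<dots> = measure_pmf.prob (binomial_pmf N ?P) {x. real x \<le> real N * (?P - d)}"
            unfolding seteq ..
          also have "\<dots> \<le> exp (- real N * d^2 / (4 * ?P))" by (rule chernoff_lower[OF Ppos P1 d0])
          also have "\<dots> \<le> exp (- k * sqrt (real n - 2 * real a))" by (rule goal_exp[OF fin])
          finally show ?thesis .
        qed
      qed
    }
  qed
qed

end
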